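(* Let $\varphi(\lambda,\mu,a_1,\dots,a_n)$ be a smooth function and let $M$ be an open subset of $\mathbb{R}^{2n}$ with coordinates $(\boldsymbol\lambda,\boldsymbol\mu)=(\lambda_1,\dots,\lambda_n,\mu_1,\dots,\mu_n)$ on which the system $$\varphi(\lambda_i,\mu_i,a_1,\dots,a_n)=0,\qquad i=1,\dots,n,$$ is solved for the parameters by smooth functions $a_k=h_k(\boldsymbol\lambda,\boldsymbol\mu)$, $k=1,\dots,n$, such that the $n\times n$ matrix $\left(\partial\varphi_s/\partial a_r\right)$, where $\varphi_s:=\varphi(\lambda_s,\mu_s,a_1,\dots,a_n)$, is invertible at $a=h(\boldsymbol\lambda,\boldsymbol\mu)$. Let $c(\lambda,\mu)$ be any $C^2$ function and let $$\pi=\sum_{i=1}^n c(\lambda_i,\mu_i)\frac{\partial}{\partial\lambda_i}\wedge\frac{\partial}{\partial\mu_i}.$$ Then $\{h_i,h_j\}_\pi=0$ for all $i,j=1,\dots,n$.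
   Context: The Poisson bracket of $\pi$ is $\{f,g\}_\pi=\sum_{k=1}^n\left(\frac{\partial f}{\partial\lambda_k}\frac{\partial g}{\partial\mu_k}-\frac{\partial f}{\partial\mu_k}\frac{\partial g}{\partial\lambda_k}\right)c(\lambda_k,\mu_k)$. *)

theory Defs
  imports "HOL-Analysis.Analysis"
begin

text \<open>C^k on an open set S: there is a family D of iterated directional
derivatives (D vs x = derivative of f at x in the directions listed in vs)
such that all derivatives up to order k exist (as Frechet derivatives) and
all derivatives of order at most k are continuous on S.\<close>
definition Ck_on :: "nat \<Rightarrow> 'a::real_normed_vector set \<Rightarrow> ('a \<Rightarrow> 'b::real_normed_vector) \<Rightarrow> bool" where
  "Ck_on k S f \<longleftrightarrow> (\<exists>D :: 'a list \<Rightarrow> 'a \<Rightarrow> 'b.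
      (\<forall>x\<in>S. D [] x = f x) \<and>
      (\<forall>vs. length vs < k \<longrightarrow> (\<forall>x\<in>S. (D vs has_derivative (\<lambda>v. D (v # vs) x)) (at x))) \<and>
      (\<forall>vs. length vs \<le> k \<longrightarrow> continuous_on S (D vs)))"

definition smooth_on :: "'a::real_normed_vector set \<Rightarrow> ('a \<Rightarrow> 'b::real_normed_vector) \<Rightarrow> bool" where
  "smooth_on S f \<longleftrightarrow> (\<forall>k. Ck_on k S f)"

definition d_lam :: "('n::finite) \<Rightarrow> ((real^'n) \<times> (real^'n) \<Rightarrow> real) \<Rightarrow> (real^'n) \<times> (real^'n) \<Rightarrow> real" where
  "d_lam k f p = frechet_derivative f (at p) (axis k 1, 0)"

definition d_mu :: "('n::finite) \<Rightarrow> ((real^'n) \<times> (real^'n) \<Rightarrow> real) \<Rightarrow> (real^'n) \<times> (real^'n) \<Rightarrow> real" where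
  "d_mu k f p = frechet_derivative f (at p) (0, axis k 1)"

definition poisson :: "(real \<times> real \<Rightarrow> real) \<Rightarrow> ((real^'n) \<times> (real^'n) \<Rightarrow> real) \<Rightarrow> ((real^'n) \<times> (real^'n) \<Rightarrow> real)
    \<Rightarrow> (real^'n) \<times> (real^'n) \<Rightarrow> real" where
  "poisson c f g p = (\<Sum>k\<in>UNIV.
      (d_lam k f p * d_mu k g p - d_mu k f p * d_lam k g p) * c (fst p $ k, snd p $ k))"

definition param_jacobian :: "(real \<times> real \<times> (real^'n) \<Rightarrow> real) \<Rightarrow> (real^'n) \<times> (real^'n) \<Rightarrow> real^'n \<Rightarrow> real^'n^'n" where
  "param_jacobian \<phi> p a = (\<chi> s r. frechet_derivative \<phi> (at (fst p $ s, snd p $ s, a)) (0, 0, axis r 1))"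

end

theory Submission
  imports Defs
begin

lemma smooth_deriv:
  assumes "smooth_on S f" "open S" "x \<in> S"
  shows "(f has_derivative frechet_derivative f (at x)) (at x)"
proof -
  from assms(1) have "Ck_on 1 S f" unfolding smooth_on_def by blast
  then obtain D where D0: "\<forall>x\<in>S. D [] x = f x"
    and D1: "\<forall>vs. length vs < (1::nat) \<longrightarrow> (\<forall>x\<in>S. (D vs has_derivative (\<lambda>v. D (v # vs) x)) (at x))"
    unfolding Ck_on_def by blast
  have "(D [] has_derivative (\<lambda>v. D [v] x)) (at x)" using D1 assms(3) by auto
  then have "(f has_derivative (\<lambda>v. D [v] x)) (at x)"
    by (rule has_derivative_transform_within_open[OF _ assms(2) assms(3)]) (use D0 in auto)
  then show ?thesis using frechet_derivative_works differentiableI by blast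
qed

lemma lin_expand:
  fixes L :: "real \<times> real \<times> (real^'n) \<Rightarrow> real"
  assumes "linear L"
  shows "L (a, b, z) = a * L (1,0,0) + b * L (0,1,0) + (\<Sum>r\<in>UNIV. z $ r * L (0,0,axis r 1))"
proof -
  have "(a, b, z) = a *\<^sub>R (1,0,0) + b *\<^sub>R (0,1,0) + (\<Sum>r\<in>UNIV. z $ r *\<^sub>R (0,0,axis r 1))"
  proof -
    have "(\<Sum>r\<in>UNIV. z $ r *\<^sub>R ((0::real),(0::real),axis r (1::real))) = (0,0,\<Sum>r\<in>UNIV. z $ r *\<^sub>R axis r 1)"
      by (simp add: prod_eq_iff fst_sum snd_sum)
    also have "(\<Sum>r\<in>UNIV. z $ r *\<^sub>R axis r 1) = z"
      using basis_expansion[of z] by (simp add: scalar_mult_eq_scaleR)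
    finally show ?thesis by simp
  qed
  then have "L (a,b,z) = L (a *\<^sub>R (1,0,0) + b *\<^sub>R (0,1,0) + (\<Sum>r\<in>UNIV. z $ r *\<^sub>R (0,0,axis r 1)))"
    by simp
  also have "\<dots> = L (a *\<^sub>R (1,0,0)) + L (b *\<^sub>R (0,1,0)) + (\<Sum>r\<in>UNIV. L (z $ r *\<^sub>R (0,0,axis r 1)))"
    by (simp only: linear_add[OF assms] linear_sum[OF assms])
  also have "\<dots> = a * L (1,0,0) + b * L (0,1,0) + (\<Sum>r\<in>UNIV. z $ r * L (0,0,axis r 1))"
    by (simp only: linear_scale[OF assms] real_scaleR_def)
  finally show ?thesis .
qed

theorem theorem4:
  fixes \<phi> :: "real \<times> real \<times> (real^'n) \<Rightarrow> real"
    and M :: "((real^'n) \<times> (real^'n)) set"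
    and h :: "(real^'n) \<times> (real^'n) \<Rightarrow> real^'n"
    and c :: "real \<times> real \<Rightarrow> real"
  assumes phi_smooth: "smooth_on UNIV \<phi>"
    and M_open: "open M"
    and h_smooth: "smooth_on M h"
    and h_solves: "\<forall>p\<in>M. \<forall>i. \<phi> (fst p $ i, snd p $ i, h p) = 0"
    and jac_inv: "\<forall>p\<in>M. invertible (param_jacobian \<phi> p (h p))"
    and c_C2: "Ck_on 2 UNIV c"
  shows "\<forall>p\<in>M. \<forall>i j. poisson c (\<lambda>q. h q $ i) (\<lambda>q. h q $ j) p = 0"
proof (intro ballI allI)
  fix p i j assume pM: "p \<in> M"
  define H' where "H' = frechet_derivative h (at p)"
  have hd: "(h has_derivative H') (at p)" unfolding H'_def by (rule smooth_deriv[OF h_smooth M_open pM])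
  define P where "P s = frechet_derivative \<phi> (at (fst p $ s, snd p $ s, h p))" for s
  have pd: "(\<phi> has_derivative P s) (at (fst p $ s, snd p $ s, h p))" for s
    unfolding P_def by (rule smooth_deriv[OF phi_smooth]) auto
  have linP: "linear (P s)" for s using pd[of s] has_derivative_linear by blast
  have comp_d: "\<And>i. ((\<lambda>q. h q $ i) has_derivative (\<lambda>v. H' v $ i)) (at p)"
    using bounded_linear.has_derivative[OF bounded_linear_vec_nth hd] by simp
  have dl: "d_lam k (\<lambda>q. h q $ i) p = H' (axis k 1, 0) $ i" for i k
    unfolding d_lam_def using frechet_derivative_at[OF comp_d[of i]] by metis
  have dm: "d_mu k (\<lambda>q. h q $ i) p = H' (0, axis k 1) $ i" for i k
    unfolding d_mu_def using frechet_derivative_at[OF comp_d[of i]] by metis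
  have key: "P s (fst v $ s, snd v $ s, H' v) = 0" for s v
  proof -
    have inner: "((\<lambda>q. (fst q $ s, snd q $ s, h q)) has_derivative (\<lambda>v. (fst v $ s, snd v $ s, H' v))) (at p)"
      by (intro has_derivative_Pair hd bounded_linear.has_derivative[OF bounded_linear_vec_nth]
          has_derivative_fst has_derivative_snd has_derivative_ident)
    have "((\<phi> \<circ> (\<lambda>q. (fst q $ s, snd q $ s, h q))) has_derivative (P s \<circ> (\<lambda>v. (fst v $ s, snd v $ s, H' v)))) (at p)"
      by (rule diff_chain_at[OF inner]) (simp add: pd)
    moreover have "((\<phi> \<circ> (\<lambda>q. (fst q $ s, snd q $ s, h q))) has_derivative (\<lambda>_. 0)) (at p)"
      by (rule has_derivative_transform_within_open[OF has_derivative_const M_open pM]) (use h_solves in auto)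
    ultimately have "(P s \<circ> (\<lambda>v. (fst v $ s, snd v $ s, H' v))) = (\<lambda>_. 0)"
      using has_derivative_unique by blast
    from fun_cong[OF this, of v] show ?thesis by simp
  qed
  define A where "A = param_jacobian \<phi> p (h p)"
  have Ase: "A $ s $ r = P s (0,0,axis r 1)" for s r unfolding A_def param_jacobian_def P_def by simp
  obtain B where BA: "B ** A = mat 1" using jac_inv pM unfolding A_def invertible_def by blast
  have solve: "H' v = - (B *v (\<chi> s. fst v $ s * P s (1,0,0) + snd v $ s * P s (0,1,0)))" for v
  proof -
    have "A *v H' v = - (\<chi> s. fst v $ s * P s (1,0,0) + snd v $ s * P s (0,1,0))"
    proof (subst vec_eq_iff, intro allI)
      fix s
      have "P s (fst v $ s, snd v $ s, H' v) = fst v $ s * P s (1,0,0) + snd v $ s * P s (0,1,0)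
             + (\<Sum>r\<in>UNIV. H' v $ r * P s (0,0,axis r 1))" by (rule lin_expand[OF linP])
      then show "(A *v H' v) $ s = (- (\<chi> s. fst v $ s * P s (1,0,0) + snd v $ s * P s (0,1,0))) $ s"
        using key[of s v] by (simp add: matrix_vector_mult_def Ase mult.commute)
    qed
    then have "B *v (A *v H' v) = B *v (- (\<chi> s. fst v $ s * P s (1,0,0) + snd v $ s * P s (0,1,0)))"
      by (rule arg_cong)
    also have "\<dots> = - (B *v (\<chi> s. fst v $ s * P s (1,0,0) + snd v $ s * P s (0,1,0)))"
      by (simp only: vec_eq_iff matrix_vector_mult_def vec_lambda_beta uminus_vec_def sum_negf[symmetric] mult_minus_right) simp
    finally have "B *v (A *v H' v) = - (B *v (\<chi> s. fst v $ s * P s (1,0,0) + snd v $ s * P s (0,1,0)))" .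
    then show ?thesis by (simp add: matrix_vector_mul_assoc BA)
  qed
  have vl: "(\<chi> s. fst (axis k 1, 0::real^'n) $ s * P s (1,0,0) + snd (axis k (1::real), 0::real^'n) $ s * P s (0,1,0))
       = P k (1,0,0) *\<^sub>R axis k 1" for k
    by (simp add: vec_eq_iff axis_def)
  have vm: "(\<chi> s. fst (0::real^'n, axis k 1) $ s * P s (1,0,0) + snd (0::real^'n, axis k (1::real)) $ s * P s (0,1,0))
       = P k (0,1,0) *\<^sub>R axis k 1" for k
    by (simp add: vec_eq_iff axis_def)
  have term0: "d_lam k (\<lambda>q. h q $ i) p * d_mu k (\<lambda>q. h q $ j) p - d_mu k (\<lambda>q. h q $ i) p * d_lam k (\<lambda>q. h q $ j) p = 0" for k
    unfolding dl dm solve vl vm by (simp add: matrix_vector_mult_scaleR)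
  show "poisson c (\<lambda>q. h q $ i) (\<lambda>q. h q $ j) p = 0"
    unfolding poisson_def by (simp only: term0 mult_zero_left sum.neutral_const)
qed

end
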